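(* Let $p$ be a prime, $n\ge1$, $d\ge2$, ${\bf a}_1,\dots,{\bf a}_N\in\mathbb{N}^{n+1}$ with coordinate sums $d$, and $I\subseteq\{0,1,\dots,n\}$. If $u,v\in U^I_{\min}$, $\nu\in\mathbb{N}^N$, and $\sum_{j=1}^N\nu_j{\bf a}_j^+=pu-v$, then $\nu_j\le p-1$ for all $j$.
   Context: ${\bf a}_j^+=({\bf a}_j,1)\in\mathbb{N}^{n+2}$. The integer $\mu_I$ is defined by $\lceil|I|/d\rceil=\mu_I+1$. $U^I$ is the set of $u=(u_0,\dots,u_{n+1})\in\mathbb{N}^{n+2}$ with $\sum_{i=0}^nu_i=du_{n+1}$ and $u_i>0$ for all $i\in I$, and $U^I_{\min}=\{u\in U^I:u_{n+1}=\mu_I+1\}$. *)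

theory Defs
  imports Complex_Main "HOL-Computational_Algebra.Primes"
begin

text \<open>Vectors in N^(n+2) are represented as functions nat => nat with indices 0..n+1
  and value 0 outside this range. The exponent vectors a_j in N^(n+1) are a j (indices 0..n).\<close>

definition aplus :: "nat \<Rightarrow> (nat \<Rightarrow> nat \<Rightarrow> nat) \<Rightarrow> nat \<Rightarrow> nat \<Rightarrow> nat" where
  "aplus n a j i = (if i \<le> n then a j i else if i = n + 1 then 1 else 0)"

definition mu :: "nat \<Rightarrow> nat set \<Rightarrow> int" where
  "mu d I = \<lceil>real (card I) / real d\<rceil> - 1"

definition U :: "nat \<Rightarrow> nat \<Rightarrow> nat set \<Rightarrow> (nat \<Rightarrow> nat) set" where
  "U n d I = {u. (\<forall>i > n + 1. u i = 0) \<and> (\<Sum>i=0..n. u i) = d * u (n + 1)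
                  \<and> (\<forall>i\<in>I. u i > 0)}"

definition U_min :: "nat \<Rightarrow> nat \<Rightarrow> nat set \<Rightarrow> (nat \<Rightarrow> nat) set" where
  "U_min n d I = {u \<in> U n d I. int (u (n + 1)) = mu d I + 1}"

end

theory Submission
  imports Defs
begin

theorem lemma2p1:
  fixes p n d N :: nat and a :: "nat \<Rightarrow> nat \<Rightarrow> nat" and I :: "nat set"
    and u v nu :: "nat \<Rightarrow> nat"
  assumes "prime p" and "n \<ge> 1" and "d \<ge> 2"
    and "\<forall>j\<in>{1..N}. (\<Sum>i=0..n. a j i) = d"
    and "I \<subseteq> {0..n}"
    and "u \<in> U_min n d I" and "v \<in> U_min n d I"
    and "\<forall>i\<le>n + 1. int (\<Sum>j=1..N. nu j * aplus n a j i) = int p * int (u i) - int (v i)"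
  shows "\<forall>j\<in>{1..N}. nu j \<le> p - 1"
proof (rule ccontr)
  assume "\<not> ?thesis"
  then obtain k where k: "k \<in> {1..N}" and nk: "nu k \<ge> p" by force
  have p0: "p > 0" using assms(1) prime_gt_0_nat by blast
  have key: "int p * int (aplus n a k i) \<le> int p * int (u i) - int (v i)" if "i \<le> n+1" for i
  proof -
    have "nu k * aplus n a k i \<le> (\<Sum>j=1..N. nu j * aplus n a j i)"
      using k by (intro member_le_sum) auto
    moreover have "p * aplus n a k i \<le> nu k * aplus n a k i" using nk by simp
    ultimately have "int (p * aplus n a k i) \<le> int (\<Sum>j=1..N. nu j * aplus n a j i)" by linarith
    thus ?thesis using assms(8) that by simp
  qed
  have ge: "aplus n a k i \<le> u i" if "i \<le> n+1" for i
  proof -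
    have "int p * int (aplus n a k i) \<le> int p * int (u i)" using key[OF that] by simp
    thus ?thesis using p0 by (simp add: mult_le_cancel_left)
  qed
  have gt: "aplus n a k i < u i" if "i \<le> n+1" "v i > 0" for i
  proof -
    have "int p * int (aplus n a k i) < int p * int (u i)" using key[OF that(1)] that(2) by simp
    thus ?thesis using p0 by (simp add: mult_less_cancel_left)
  qed
  have uU: "u \<in> U n d I" "int (u (n+1)) = mu d I + 1" using assms(6) by (auto simp: U_min_def)
  have vU: "\<forall>i\<in>I. v i > 0" using assms(7) by (auto simp: U_min_def U_def)
  have su: "(\<Sum>i=0..n. u i) = d * u (n+1)" using uU(1) by (auto simp: U_def)
  have u1: "u (n+1) \<ge> 1" using ge[of "n+1"] by (simp add: aplus_def)
  have ak: "(\<Sum>i=0..n. a k i) = d" using assms(4) k by blast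
  have aeq: "aplus n a k i = a k i" if "i \<in> {0..n}" for i using that by (simp add: aplus_def)
  have "(\<Sum>i=0..n. u i - a k i) = (\<Sum>i=0..n. u i) - (\<Sum>i=0..n. a k i)"
    by (rule sum_subtractf_nat) (use ge aeq in \<open>metis atLeastAtMost_iff le_SucI Suc_eq_plus1\<close>)
  hence S: "(\<Sum>i=0..n. u i - a k i) = d * (u (n+1) - 1)" using su ak
    by (simp add: right_diff_distrib')
  have "card I = (\<Sum>i\<in>I. 1::nat)" by simp
  also have "\<dots> \<le> (\<Sum>i\<in>I. u i - a k i)"
  proof (rule sum_mono)
    fix i assume "i \<in> I"
    hence "i \<le> n" "v i > 0" using assms(5) vU by auto
    thus "1 \<le> u i - a k i" using gt[of i] aeq[of i] by simp
  qed
  also have "\<dots> \<le> (\<Sum>i=0..n. u i - a k i)"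
    using assms(5) by (intro sum_mono2) auto
  finally have c: "card I \<le> d * (u (n+1) - 1)" using S by simp
  have m: "mu d I = int (u (n+1)) - 1" using uU(2) by simp
  have "real_of_int (mu d I) < real (card I) / real d"
    unfolding mu_def by linarith
  hence "real (u (n+1) - 1) < real (card I) / real d" using m u1 by (simp add: of_nat_diff)
  hence "real (u (n+1) - 1) * real d < real (card I)" using assms(3)
    by (simp add: pos_less_divide_eq)
  hence "(u (n+1) - 1) * d < card I" by (simp only: of_nat_mult[symmetric] of_nat_less_iff)
  thus False using c by (simp add: mult.commute)
qed

end
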